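(* Let $u$ be a coherent utility on $L^0$ with determining set $\mathcal{D}$, $\rho=-u$, and let $Y^1,\dots,Y^M$ be independent random variables (or random vectors); write $Y=(Y^1,\dots,Y^M)$. Let $X=\sum_{m=1}^MX^m$, where each $X^m$ is $\sigma(Y^m)$-measurable, $X^m\in L^1_s(\mathcal{D})\cap L^1_s(\mathsf{E}(\mathcal{D}\mid Y))\cap L^1$, and $\mathsf{E}X^m=0$. Then $$\rho^f(X;Y^1,\dots,Y^M)\le\sum_{m=1}^M\rho^f(X;Y^m).$$
   Context: Let $(\Omega,\mathcal{F},\mathsf{P})$ be a probability space, $L^0$ the space of all real random variables, $L^1=L^1(\mathsf{P})$, and $\mathcal{P}$ the set of probability measures on $\mathcal{F}$ absolutely continuous with respect to $\mathsf{P}$; measures $\mathsf{Q}\in\mathcal{P}$ are identified with their densities. For $\mathsf{Q}\in\mathcal{P}$ and $X\in L^0$, $\mathsf{E}_\mathsf{Q}X:=\mathsf{E}_\mathsf{Q}X^+-\mathsf{E}_\mathsf{Q}X^-$ with the convention $\infty-\infty=-\infty$; $\mathsf{E}$ is expectation under $\mathsf{P}$. A coherent utility on $L^0$ is a map $u:L^0\to[-\infty,\infty]$ of the form $u(X)=\inf_{\mathsf{Q}\in\mathcal{D}}\mathsf{E}_\mathsf{Q}X$ for a nonempty $\mathcal{D}\subseteq\mathcal{P}$; its determining set is the largest such set, $\{\mathsf{Q}\in\mathcal{P}:\mathsf{E}_\mathsf{Q}X\ge u(X)\ \forall X\in L^0\}$. For $\mathcal{C}\subseteq\mathcal{P}$,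 $L^1_s(\mathcal{C})=\{X\in L^0:\lim_{n\to\infty}\sup_{\mathsf{Q}\in\mathcal{C}}\mathsf{E}_\mathsf{Q}|X|I(|X|>n)=0\}$. For a random vector $V$, $\mathsf{E}(\mathcal{D}\mid V):=\{\mathsf{E}(Z\mid V):Z\in\mathcal{D}\}$, the factor utility is $u^f(X;V):=\inf_{\mathsf{Q}\in\mathsf{E}(\mathcal{D}\mid V)}\mathsf{E}_\mathsf{Q}X$, and the factor risk is $\rho^f(X;V):=-u^f(X;V)$; $\rho^f(X;Y^1,\dots,Y^M)$ means $\rho^f(X;(Y^1,\dots,Y^M))$. *)

theory Defs
  imports "HOL-Probability.Probability"
begin

text \<open>Measures Q absolutely continuous w.r.t. P, identified with their densities Z = dQ/dP.\<close>
definition densities :: "'a measure \<Rightarrow> ('a \<Rightarrow> real) set" where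
  "densities M = {Z. Z \<in> borel_measurable M \<and> (AE x in M. 0 \<le> Z x)
                    \<and> (\<integral>\<^sup>+ x. ennreal (Z x) \<partial>M) = 1}"

text \<open>E_Q X = E_Q X^+ - E_Q X^- with the convention \<infinity> - \<infinity> = -\<infinity>.\<close>
definition EQ :: "'a measure \<Rightarrow> ('a \<Rightarrow> real) \<Rightarrow> ('a \<Rightarrow> real) \<Rightarrow> ereal" where
  "EQ M Z X =
     (let a = enn2ereal (\<integral>\<^sup>+ x. ennreal (Z x * max (X x) 0) \<partial>M);
          b = enn2ereal (\<integral>\<^sup>+ x. ennreal (Z x * max (- X x) 0) \<partial>M)
      in if b = \<infinity> then - \<infinity> else a - b)"

definition coherent_utility :: "'a measure \<Rightarrow> (('a \<Rightarrow> real) \<Rightarrow> ereal) \<Rightarrow> bool" where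
  "coherent_utility M u \<longleftrightarrow>
     (\<exists>D. D \<noteq> {} \<and> D \<subseteq> densities M \<and>
          (\<forall>X \<in> borel_measurable M. u X = (INF Z\<in>D. EQ M Z X)))"

text \<open>Determining set: the largest such set.\<close>
definition determining_set :: "'a measure \<Rightarrow> (('a \<Rightarrow> real) \<Rightarrow> ereal) \<Rightarrow> ('a \<Rightarrow> real) set" where
  "determining_set M u = {Z \<in> densities M. \<forall>X \<in> borel_measurable M. u X \<le> EQ M Z X}"

definition L1s :: "'a measure \<Rightarrow> ('a \<Rightarrow> real) set \<Rightarrow> ('a \<Rightarrow> real) set" where
  "L1s M C = {X \<in> borel_measurable M.
     (\<lambda>n::nat. SUP Z\<in>C. \<integral>\<^sup>+ x. ennreal (Z x * \<bar>X x\<bar>) * indicator {y. \<bar>X y\<bar> > real n} x \<partial>M)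
       \<longlonglongrightarrow> 0}"

definition cond_set :: "'a measure \<Rightarrow> ('a \<Rightarrow> real) set \<Rightarrow> 'a measure \<Rightarrow> ('a \<Rightarrow> real) set" where
  "cond_set M D F = (\<lambda>Z. real_cond_exp M F Z) ` D"

definition sigma_gen :: "'a measure \<Rightarrow> ('a \<Rightarrow> 'b) \<Rightarrow> 'b measure \<Rightarrow> 'a measure" where
  "sigma_gen M V N = vimage_algebra (space M) V N"

definition factor_utility :: "'a measure \<Rightarrow> ('a \<Rightarrow> real) set \<Rightarrow> ('a \<Rightarrow> real) \<Rightarrow> ('a \<Rightarrow> 'b) \<Rightarrow> 'b measure \<Rightarrow> ereal" where
  "factor_utility M D X V N = (INF Z \<in> cond_set M D (sigma_gen M V N). EQ M Z X)"

definition factor_risk :: "'a measure \<Rightarrow> ('a \<Rightarrow> real) set \<Rightarrow> ('a \<Rightarrow> real) \<Rightarrow> ('a \<Rightarrow> 'b) \<Rightarrow> 'b measure \<Rightarrow> ereal" where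
  "factor_risk M D X V N = - factor_utility M D X V N"

definition joint_vec :: "nat \<Rightarrow> (nat \<Rightarrow> 'a \<Rightarrow> 'b) \<Rightarrow> 'a \<Rightarrow> (nat \<Rightarrow> 'b)" where
  "joint_vec n Y = (\<lambda>\<omega>. \<lambda>m\<in>{1..n}. Y m \<omega>)"

end

theory Submission imports Defs begin

lemma sub_sigma_gen:
  assumes "prob_space M" "V \<in> measurable M N"
  shows "sigma_finite_subalgebra M (sigma_gen M V N)" "space (sigma_gen M V N) = space M"
    "sets (sigma_gen M V N) = {V -` A \<inter> space M | A. A \<in> sets N}"
proof -
  have fs: "V \<in> space M \<rightarrow> space N" using assms(2) by (simp add: measurable_def)
  show sp: "space (sigma_gen M V N) = space M" by (simp add: sigma_gen_def)
  show st: "sets (sigma_gen M V N) = {V -` A \<inter> space M | A. A \<in> sets N}"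
    unfolding sigma_gen_def by (rule sets_vimage_algebra2[OF fs])
  have "subalgebra M (sigma_gen M V N)"
    unfolding subalgebra_def using sp st assms(2) by (auto intro: measurable_sets)
  then have "finite_measure_subalgebra M (sigma_gen M V N)"
    using assms(1) by (simp add: finite_measure_subalgebra_def finite_measure_subalgebra_axioms_def prob_space_def)
  then show "sigma_finite_subalgebra M (sigma_gen M V N)"
    by (rule finite_measure_subalgebra_is_sigma_finite)
qed

lemma enn2ereal_fin: "a < \<top> \<Longrightarrow> enn2ereal a = ereal (enn2real a)"
  by (cases a rule: ennreal_cases) (auto simp: enn2ereal_ennreal)

lemma EQ_integral:
  assumes [measurable]: "W \<in> borel_measurable M" "X \<in> borel_measurable M"
    and "AE x in M. 0 \<le> W x" and int: "integrable M (\<lambda>x. W x * X x)"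
  shows "EQ M W X = ereal (\<integral>x. W x * X x \<partial>M)"
proof -
  have a: "(\<integral>\<^sup>+ x. ennreal (W x * max (X x) 0) \<partial>M) = (\<integral>\<^sup>+ x. ennreal (W x * X x) \<partial>M)"
    apply (rule nn_integral_cong_AE) using assms(3)
    by eventually_elim (auto simp: max_def ennreal_neg mult_nonneg_nonpos)
  have b: "(\<integral>\<^sup>+ x. ennreal (W x * max (- X x) 0) \<partial>M) = (\<integral>\<^sup>+ x. ennreal (- (W x * X x)) \<partial>M)"
    apply (rule nn_integral_cong_AE) using assms(3)
    by eventually_elim (auto simp: max_def ennreal_neg mult_nonneg_nonpos)
  have fa: "(\<integral>\<^sup>+ x. ennreal (W x * X x) \<partial>M) < \<infinity>"
    using int by (simp add: real_integrable_def less_top)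
  have fb: "(\<integral>\<^sup>+ x. ennreal (- (W x * X x)) \<partial>M) < \<infinity>"
    using int by (simp add: real_integrable_def less_top)
  show ?thesis
    unfolding EQ_def Let_def a b real_lebesgue_integral_def[OF int] using fa fb
    by (simp add: enn2ereal_fin)
qed

lemma density_integrable:
  assumes "Z \<in> densities M"
  shows "integrable M Z" "Z \<in> borel_measurable M" "AE x in M. 0 \<le> Z x"
proof -
  show zm: "Z \<in> borel_measurable M" and zp: "AE x in M. 0 \<le> Z x"
    using assms by (auto simp: densities_def)
  have "(\<integral>\<^sup>+ x. ennreal (Z x) \<partial>M) = ennreal 1" using assms by (simp add: densities_def)
  then show "integrable M Z" by (rule integrableI_nn_integral_finite[OF zm zp])
qed

lemma L1s_integrable:
  assumes X: "X \<in> L1s M D" and Z: "Z \<in> D" and DD: "D \<subseteq> densities M"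
  shows "integrable M (\<lambda>x. X x * Z x)"
proof -
  have Zd: "Z \<in> densities M" using Z DD by auto
  note zi = density_integrable[OF Zd]
  have [measurable]: "X \<in> borel_measurable M" using X by (simp add: L1s_def)
  have [measurable]: "Z \<in> borel_measurable M" using zi by simp
  have lim: "(\<lambda>n::nat. SUP Z\<in>D. \<integral>\<^sup>+ x. ennreal (Z x * \<bar>X x\<bar>) * indicator {y. \<bar>X y\<bar> > real n} x \<partial>M)
       \<longlonglongrightarrow> 0" using X by (simp add: L1s_def)
  have "eventually (\<lambda>n. (SUP Z\<in>D. \<integral>\<^sup>+ x. ennreal (Z x * \<bar>X x\<bar>) * indicator {y. \<bar>X y\<bar> > real n} x \<partial>M) < 1) sequentially"
    using order_tendstoD(2)[OF lim] by simp
  then obtain N where N: "(SUP Z\<in>D. \<integral>\<^sup>+ x. ennreal (Z x * \<bar>X x\<bar>) * indicator {y. \<bar>X y\<bar> > real N} x \<partial>M) < 1"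
    by (auto simp: eventually_sequentially)
  have t1: "(\<integral>\<^sup>+ x. ennreal (Z x * \<bar>X x\<bar>) * indicator {y. \<bar>X y\<bar> > real N} x \<partial>M) < 1"
    using le_less_trans[OF SUP_upper[OF Z] N] .
  have "(\<integral>\<^sup>+ x. ennreal (norm (X x * Z x)) \<partial>M)
      \<le> (\<integral>\<^sup>+ x. ennreal (Z x * \<bar>X x\<bar>) * indicator {y. \<bar>X y\<bar> > real N} x + ennreal (real N) * ennreal (Z x) \<partial>M)"
  proof (rule nn_integral_mono_AE)
    show "AE x in M. ennreal (norm (X x * Z x)) \<le> ennreal (Z x * \<bar>X x\<bar>) * indicator {y. \<bar>X y\<bar> > real N} x + ennreal (real N) * ennreal (Z x)"
      using zi(3)
    proof eventually_elim
      case (elim x)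
      show ?case
      proof (cases "\<bar>X x\<bar> > real N")
        case True then show ?thesis using elim by (simp add: abs_mult mult.commute)
      next
        case False
        then have "Z x * \<bar>X x\<bar> \<le> real N * Z x" using elim by (metis mult.commute mult_left_mono not_less)
        then show ?thesis using False elim by (simp add: abs_mult mult.commute ennreal_mult[symmetric] ennreal_leI)
      qed
    qed
  qed
  also have "\<dots> = (\<integral>\<^sup>+ x. ennreal (Z x * \<bar>X x\<bar>) * indicator {y. \<bar>X y\<bar> > real N} x \<partial>M) + ennreal (real N) * (\<integral>\<^sup>+ x. ennreal (Z x) \<partial>M)"
    by (simp add: nn_integral_add nn_integral_cmult)
  also have "\<dots> < \<infinity>" using t1 Zd by (simp add: densities_def ennreal_mult_less_top less_top[symmetric] ennreal_add_less_top)
      (metis ennreal_add_less_top ennreal_less_top ennreal_one_less_top less_trans t1 top.not_eq_extremum)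
  finally show ?thesis by (intro integrableI_bounded) auto
qed

lemma fin: fixes s :: "'z \<Rightarrow> real" and g :: "nat \<Rightarrow> 'z \<Rightarrow> real"
  assumes "\<And>Z. Z \<in> D \<Longrightarrow> s Z = (\<Sum>m\<in>I. g m Z)"
  shows "- (INF Z\<in>D. ereal (s Z)) \<le> (\<Sum>m\<in>I. - (INF Z\<in>D. ereal (g m Z)))"
proof -
  have "- (\<Sum>m\<in>I. - (INF Z\<in>D. ereal (g m Z))) \<le> (INF Z\<in>D. ereal (s Z))"
  proof (rule INF_greatest)
    fix Z assume Z: "Z \<in> D"
    have "ereal (- s Z) = (\<Sum>m\<in>I. ereal (- g m Z))"
      using assms[OF Z] by (simp add: sum_negf)
    also have "\<dots> \<le> (\<Sum>m\<in>I. - (INF Z\<in>D. ereal (g m Z)))"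
    proof (rule sum_mono)
      fix m assume "m \<in> I"
      have "(INF Z\<in>D. ereal (g m Z)) \<le> ereal (g m Z)" using Z by (rule INF_lower)
      then show "ereal (- g m Z) \<le> - (INF Z\<in>D. ereal (g m Z))"
        by (metis ereal_minus_le_minus uminus_ereal.simps(1))
    qed
    finally show "- (\<Sum>m\<in>I. - (INF Z\<in>D. ereal (g m Z))) \<le> ereal (s Z)"
      by (metis ereal_uminus_le_reorder uminus_ereal.simps(1) ereal_minus_le_minus)
  qed
  then show ?thesis by (simp add: ereal_uminus_le_reorder)
qed

theorem proposition3p10:
  fixes M :: "'a measure" and u :: "('a \<Rightarrow> real) \<Rightarrow> ereal" and D :: "('a \<Rightarrow> real) set"
    and n :: nat and Y :: "nat \<Rightarrow> 'a \<Rightarrow> 'b::euclidean_space" and Xs :: "nat \<Rightarrow> 'a \<Rightarrow> real"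
    and X :: "'a \<Rightarrow> real"
  assumes "prob_space M"
    and "coherent_utility M u"
    and "D = determining_set M u"
    and "\<And>m. m \<in> {1..n} \<Longrightarrow> Y m \<in> borel_measurable M"
    and "prob_space.indep_vars M (\<lambda>_. borel) Y {1..n}"
    and "X = (\<lambda>\<omega>. \<Sum>m = 1..n. Xs m \<omega>)"
    and "\<And>m. m \<in> {1..n} \<Longrightarrow> Xs m \<in> borel_measurable (sigma_gen M (Y m) borel)"
    and "\<And>m. m \<in> {1..n} \<Longrightarrow> Xs m \<in> L1s M D"
    and "\<And>m. m \<in> {1..n} \<Longrightarrow>
           Xs m \<in> L1s M (cond_set M D (sigma_gen M (joint_vec n Y) (PiM {1..n} (\<lambda>_. borel))))"
    and "\<And>m. m \<in> {1..n} \<Longrightarrow> integrable M (Xs m)"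
    and "\<And>m. m \<in> {1..n} \<Longrightarrow> integral\<^sup>L M (Xs m) = 0"
  shows "factor_risk M D X (joint_vec n Y) (PiM {1..n} (\<lambda>_. borel))
           \<le> (\<Sum>m = 1..n. factor_risk M D X (Y m) borel)"
proof -
  note P = assms(1)
  interpret prob_space M by (rule P)
  obtain D0 where D0: "D0 \<noteq> {}" "D0 \<subseteq> densities M" "\<forall>X \<in> borel_measurable M. u X = (INF Z\<in>D0. EQ M Z X)"
    using assms(2) unfolding coherent_utility_def by blast
  have DD: "D \<subseteq> densities M" using assms(3) by (auto simp: determining_set_def)
  define PN where "PN = PiM {1..n} (\<lambda>_::nat. (borel :: 'b measure))"
  define F where "F = sigma_gen M (joint_vec n Y) PN"
  define Fm where "Fm m = sigma_gen M (Y m) borel" for m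
  have jm: "joint_vec n Y \<in> measurable M PN"
    unfolding PN_def joint_vec_def by (rule measurable_restrict) (use assms(4) in auto)
  note sF = sub_sigma_gen[OF P jm, folded F_def]
  have sFm: "sigma_finite_subalgebra M (Fm m)" "space (Fm m) = space M"
    "sets (Fm m) = {Y m -` A \<inter> space M | A. A \<in> sets borel}" if "m \<in> {1..n}" for m
    using sub_sigma_gen[OF P assms(4)[OF that]] by (simp_all add: Fm_def)
  have YF: "Y m \<in> borel_measurable F" if m: "m \<in> {1..n}" for m
  proof -
    have "joint_vec n Y \<in> measurable F PN"
      unfolding F_def sigma_gen_def
      by (rule measurable_vimage_algebra1) (use jm in \<open>auto simp: measurable_def\<close>)
    then have "(\<lambda>x. joint_vec n Y x m) \<in> borel_measurable F"
      unfolding PN_def using m by measurable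
    then show ?thesis using m by (simp add: joint_vec_def)
  qed
  have XsM: "Xs m \<in> borel_measurable M" if m: "m \<in> {1..n}" for m
    using measurable_from_subalg[OF sigma_finite_subalgebra.subalg[OF sFm(1)[OF m]] assms(7)[OF m, folded Fm_def]] .
  have XsF: "Xs m \<in> borel_measurable F" if m: "m \<in> {1..n}" for m
  proof -
    have "subalgebra F (Fm m)"
      unfolding subalgebra_def
    proof
      show "space (Fm m) = space F" using sFm(2)[OF m] sF(2) by simp
      show "sets (Fm m) \<subseteq> sets F"
      proof
        fix S assume "S \<in> sets (Fm m)"
        then obtain A where A: "A \<in> sets borel" "S = Y m -` A \<inter> space M" using sFm(3)[OF m] by auto
        show "S \<in> sets F" using measurable_sets[OF YF[OF m] A(1)] A(2) sF(2) by simp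
      qed
    qed
    then show ?thesis using measurable_from_subalg assms(7)[OF m, folded Fm_def] by blast
  qed
  have XM: "X \<in> borel_measurable M" unfolding assms(6) using XsM by (intro borel_measurable_sum) auto
  define g where "g m Z = (\<integral>x. Xs m x * Z x \<partial>M)" for m Z
  have intXZ: "integrable M (\<lambda>x. Xs m x * Z x)" if "m \<in> {1..n}" "Z \<in> D" for m Z
    using L1s_integrable[OF assms(8)[OF that(1)] that(2) DD] .
  have A: "EQ M (real_cond_exp M F Z) X = ereal (\<Sum>m\<in>{1..n}. g m Z)" if Z: "Z \<in> D" for Z
  proof -
    note zi = density_integrable[of Z M]
    have zd: "Z \<in> densities M" using Z DD by auto
    have WM: "real_cond_exp M F Z \<in> borel_measurable M"
by (rule borel_measurable_cond_exp2)
    have Wp: "AE x in M. 0 \<le> real_cond_exp M F Z x"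
      using sigma_finite_subalgebra.real_cond_exp_pos[OF sF(1)] zi zd by blast
    have i: "integrable M (\<lambda>x. Xs m x * real_cond_exp M F Z x)"
      "(\<integral>x. Xs m x * real_cond_exp M F Z x \<partial>M) = g m Z" if m: "m \<in> {1..n}" for m
      using sigma_finite_subalgebra.real_cond_exp_intg[OF sF(1) intXZ[OF m Z] XsF[OF m]] zi zd
      by (auto simp: g_def)
    have eq: "(\<lambda>x. real_cond_exp M F Z x * X x) = (\<lambda>x. \<Sum>m\<in>{1..n}. Xs m x * real_cond_exp M F Z x)"
      by (simp add: assms(6) sum_distrib_left mult.commute)
    have int: "integrable M (\<lambda>x. real_cond_exp M F Z x * X x)"
      unfolding eq by (intro Bochner_Integration.integrable_sum i(1)) auto
    have "EQ M (real_cond_exp M F Z) X = ereal (\<integral>x. real_cond_exp M F Z x * X x \<partial>M)"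
      by (rule EQ_integral[OF WM XM Wp int])
    also have "\<dots> = ereal (\<Sum>m\<in>{1..n}. g m Z)"
      unfolding eq by (subst Bochner_Integration.integral_sum) (use i in auto)
    finally show ?thesis .
  qed
  have B: "EQ M (real_cond_exp M (Fm m) Z) X = ereal (g m Z)" if m: "m \<in> {1..n}" and Z: "Z \<in> D" for m Z
  proof -
    note zi = density_integrable[of Z M]
    have zd: "Z \<in> densities M" using Z DD by auto
    define W where "W = real_cond_exp M (Fm m) Z"
    have WFm: "W \<in> borel_measurable (Fm m)"
      unfolding W_def by (rule borel_measurable_cond_exp)
    have WM: "W \<in> borel_measurable M"
      using measurable_from_subalg[OF sigma_finite_subalgebra.subalg[OF sFm(1)[OF m]] WFm] .
    have Wp: "AE x in M. 0 \<le> W x"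
      unfolding W_def using sigma_finite_subalgebra.real_cond_exp_pos[OF sFm(1)[OF m]] zi zd by blast
    have Wi: "integrable M W"
      unfolding W_def using sigma_finite_subalgebra.real_cond_exp_int(1)[OF sFm(1)[OF m]] zi zd by blast
    have Wint: "(\<integral>x. W x \<partial>M) = 1"
    proof -
      have "(\<integral>x. W x \<partial>M) = (\<integral>x. Z x \<partial>M)"
        unfolding W_def using sigma_finite_subalgebra.real_cond_exp_int(2)[OF sFm(1)[OF m]] zi zd by blast
      also have "\<dots> = 1"
      proof -
        have "(\<integral>\<^sup>+ x. ennreal (Z x) \<partial>M) = ennreal 1" using zd by (simp add: densities_def)
        then show ?thesis using zi zd
          by (subst integral_eq_nn_integral) auto
      qed
      finally show ?thesis .
    qed
    have i: "integrable M (\<lambda>x. Xs k x * W x) \<and>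
      (\<integral>x. Xs k x * W x \<partial>M) = (if k = m then g m Z else 0)" if k: "k \<in> {1..n}" for k
    proof (cases "k = m")
      case True
      then show ?thesis
        using sigma_finite_subalgebra.real_cond_exp_intg[OF sFm(1)[OF m] intXZ[OF m Z] assms(7)[OF m, folded Fm_def]] zi zd
        by (auto simp: g_def W_def)
    next
      case False
      define X' where "X' i = (if i = k then Xs k else W)" for i
      have ind: "indep_vars (\<lambda>_. borel) X' {k, m}"
        unfolding indep_vars_def2
      proof
        show "\<forall>i\<in>{k, m}. random_variable borel (X' i)" using XsM[OF k] WM by (auto simp: X'_def)
        have "indep_sets (\<lambda>i. {Y i -` A \<inter> space M | A. A \<in> sets borel}) {1..n}"
          using assms(5) unfolding indep_vars_def2 by blast
        then show "indep_sets (\<lambda>i. {X' i -` A \<inter> space M | A. A \<in> sets borel}) {k, m}"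
        proof (rule indep_sets_mono)
          show "{k, m} \<subseteq> {1..n}" using k m by auto
          fix i assume i: "i \<in> {k, m}"
          then have i1: "i \<in> {1..n}" using k m by auto
          have mi: "X' i \<in> borel_measurable (Fm i)"
            using i False WFm assms(7)[OF k] by (auto simp: X'_def Fm_def)
          show "{X' i -` A \<inter> space M | A. A \<in> sets borel} \<subseteq> {Y i -` A \<inter> space M | A. A \<in> sets borel}"
          proof
            fix S assume "S \<in> {X' i -` A \<inter> space M | A. A \<in> sets borel}"
            then obtain A where A: "A \<in> sets borel" "S = X' i -` A \<inter> space M" by auto
            have "X' i -` A \<inter> space (Fm i) \<in> sets (Fm i)" using measurable_sets[OF mi A(1)] .
            then show "S \<in> {Y i -` A \<inter> space M | A. A \<in> sets borel}"
              using sFm(2,3)[OF i1] A(2) by simp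
          qed
        qed
      qed
      have ii: "\<And>i. i \<in> {k, m} \<Longrightarrow> integrable M (X' i)"
        using Wi assms(10)[OF k] by (auto simp: X'_def)
      have pr: "(\<lambda>x. \<Prod>i\<in>{k, m}. X' i x) = (\<lambda>x. Xs k x * W x)"
        using False by (simp add: X'_def)
      show ?thesis
        using indep_vars_lebesgue_integral[OF _ ind ii] indep_vars_integrable[OF _ ind ii] False
        unfolding pr by (simp add: X'_def assms(11)[OF k])
    qed
    have eq: "(\<lambda>x. W x * X x) = (\<lambda>x. \<Sum>k\<in>{1..n}. Xs k x * W x)"
      by (simp add: assms(6) sum_distrib_left mult.commute)
    have int: "integrable M (\<lambda>x. W x * X x)"
      unfolding eq by (intro Bochner_Integration.integrable_sum conjunct1[OF i]) auto
    have "EQ M W X = ereal (\<integral>x. W x * X x \<partial>M)"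
      by (rule EQ_integral[OF WM XM Wp int])
    also have "\<dots> = ereal (\<Sum>k\<in>{1..n}. (if k = m then g m Z else 0))"
      unfolding eq by (subst Bochner_Integration.integral_sum) (use i in auto)
    also have "\<dots> = ereal (g m Z)" using m by simp
    finally show ?thesis unfolding W_def .
  qed
  have L: "factor_risk M D X (joint_vec n Y) PN = - (INF Z\<in>D. ereal (\<Sum>m\<in>{1..n}. g m Z))"
    unfolding factor_risk_def factor_utility_def cond_set_def image_image F_def[symmetric]
    using A by (simp cong: INF_cong)
  have R: "factor_risk M D X (Y m) borel = - (INF Z\<in>D. ereal (g m Z))" if "m \<in> {1..n}" for m
    unfolding factor_risk_def factor_utility_def cond_set_def image_image Fm_def[symmetric]
    using B[OF that] by (simp cong: INF_cong)
  show ?thesis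
  proof -
    have "(\<Sum>m = 1..n. factor_risk M D X (Y m) borel) = (\<Sum>m = 1..n. - (INF Z\<in>D. ereal (g m Z)))"
      using R by (rule sum.cong[OF refl])
    then show ?thesis unfolding PN_def[symmetric] L by (simp only: fin)
  qed
qed

end
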